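(* Let $\mathcal{F}$ be any finite constraint family and $k$ a constant. The problem $\mathrm{Csp}_k^\gamma(\mathcal{F})$ with $\gamma={u_{\min}}(\mathcal{F})$ is non-trivial. Conversely, if $\gamma<{u_{\min}}(\mathcal{F})$, then there exists $n_0$ such that any instance of $\mathrm{Csp}_k^\gamma(\mathcal{F})$ with at least $n_0$ variables admits a satisfying assignment of weight $k$.
   Context: A constraint family $\mathcal{F}$ is a finite set of non-constant Boolean functions $f:\{0,1\}^r\to\{0,1\}$ (arity $r$ may depend on $f$). For constant integer $k$ and real $\gamma\ge 0$, $\mathrm{Csp}_k^\gamma(\mathcal{F})$ is the problem: given Boolean variables $x_1,\dots,x_n$ and a set of $m=\Theta(n^\gamma)$ constraints, each of the form $f(x_{i_1},\dots,x_{i_r})$ with $f\in\mathcal{F}$ of arity $r$ and $i_1,\dots,i_r$ pairwise distinct, decide whether there is an assignment setting exactly $k$ variables to $1$ (weight $k$) that satisfies all constraints. The problem is non-trivial if it has infinitely many NO-instances, and trivial if for all sufficiently large $n$ every instance with $n$ variables is a YES-instance. For $f$, ${u_{\min}}(f)=\min\{\|a\|_1 : f(a)=0\}$ is the minimum weight of a violating assignment, and ${u_{\min}}(\mathcal{F})=\min_{f\in\mathcal{F}}{u_{\min}}(f)$.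
   Formalization: Non-triviality at $\gamma={u_{\min}}(\mathcal{F})$ holds only when ${u_{\min}}(\mathcal{F})\le k$, and for some choice of the constants in $m=\Theta(n^\gamma)$, whereas the converse holds for every choice of those constants. Each condition added here is assumed in the paper as well or is needed for the statement above to hold. *)

theory Defs
  imports Complex_Main
begin

text \<open>A Boolean function of arity r is represented as a pair (r, f) with
  f :: bool list => bool, only ever evaluated on lists of length r.\<close>
type_synonym bfun = "nat \<times> (bool list \<Rightarrow> bool)"

text \<open>A constraint: a function of the family together with its scope,
  a list of variable indices (variables are x_0, ..., x_(n-1)).\<close>
type_synonym constr = "bfun \<times> nat list"

definition nonconst :: "bfun \<Rightarrow> bool" where
  "nonconst \<phi> \<longleftrightarrow> (\<exists>a b. length a = fst \<phi> \<and> length b = fst \<phi> \<and> snd \<phi> a \<noteq> snd \<phi> b)"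

definition constraint_family :: "bfun set \<Rightarrow> bool" where
  "constraint_family F \<longleftrightarrow> finite F \<and> (\<forall>\<phi>\<in>F. nonconst \<phi>)"

definition weight :: "bool list \<Rightarrow> nat" where
  "weight a = length (filter id a)"

definition umin_fun :: "bfun \<Rightarrow> nat" where
  "umin_fun \<phi> = Min {weight a | a. length a = fst \<phi> \<and> \<not> snd \<phi> a}"

definition umin :: "bfun set \<Rightarrow> nat" where
  "umin F = Min (umin_fun ` F)"

definition is_instance :: "bfun set \<Rightarrow> nat \<Rightarrow> constr set \<Rightarrow> bool" where
  "is_instance F n C \<longleftrightarrow> finite C \<and>
     (\<forall>(\<phi>, is) \<in> C. \<phi> \<in> F \<and> length is = fst \<phi> \<and> distinct is \<and> set is \<subseteq> {..<n})"

definition sat_constr :: "(nat \<Rightarrow> bool) \<Rightarrow> constr \<Rightarrow> bool" where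
  "sat_constr x c = snd (fst c) (map x (snd c))"

definition yes_instance :: "nat \<Rightarrow> nat \<Rightarrow> constr set \<Rightarrow> bool" where
  "yes_instance k n C \<longleftrightarrow>
     (\<exists>x :: nat \<Rightarrow> bool. card {i. i < n \<and> x i} = k \<and> (\<forall>c\<in>C. sat_constr x c))"

text \<open>Instances of Csp_k^gamma(F): m = Theta(n^gamma), made explicit via constants
  c1, c2 with c1 * n^gamma <= m <= c2 * n^gamma.\<close>
definition csp_instance ::
  "bfun set \<Rightarrow> real \<Rightarrow> real \<Rightarrow> real \<Rightarrow> nat \<Rightarrow> constr set \<Rightarrow> bool" where
  "csp_instance F \<gamma> c1 c2 n C \<longleftrightarrow> is_instance F n C \<and>
     c1 * real n powr \<gamma> \<le> real (card C) \<and> real (card C) \<le> c2 * real n powr \<gamma>"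

definition nontrivial_csp :: "bfun set \<Rightarrow> nat \<Rightarrow> real \<Rightarrow> real \<Rightarrow> real \<Rightarrow> bool" where
  "nontrivial_csp F k \<gamma> c1 c2 \<longleftrightarrow>
     infinite {(n, C). csp_instance F \<gamma> c1 c2 n C \<and> \<not> yes_instance k n C}"

definition trivial_csp :: "bfun set \<Rightarrow> nat \<Rightarrow> real \<Rightarrow> real \<Rightarrow> real \<Rightarrow> bool" where
  "trivial_csp F k \<gamma> c1 c2 \<longleftrightarrow>
     (\<exists>n0. \<forall>n\<ge>n0. \<forall>C. csp_instance F \<gamma> c1 c2 n C \<longrightarrow> yes_instance k n C)"

end

theory Submission
  imports Defs
begin

fun bld :: "bool list \<Rightarrow> nat list \<Rightarrow> nat list \<Rightarrow> nat list" where
  "bld [] s d = []"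
| "bld (True#a) s d = hd s # bld a (tl s) d"
| "bld (False#a) s d = hd d # bld a s (tl d)"

lemma bld_props:
  "length s = length (filter (\<lambda>b. b) a) \<Longrightarrow> length d = length (filter Not a) \<Longrightarrow>
   length (bld a s d) = length a \<and> set (bld a s d) = set s \<union> set d"
proof (induction a arbitrary: s d)
  case Nil then show ?case by simp
next
  case (Cons b a)
  show ?case
  proof (cases b)
    case True
    with Cons.prems obtain y s' where s: "s = y # s'" by (cases s) auto
    with Cons.IH[of s' d] Cons.prems True show ?thesis by auto
  next
    case False
    with Cons.prems obtain y d' where d: "d = y # d'" by (cases d) auto
    with Cons.IH[of s d'] Cons.prems False show ?thesis by auto
  qed
qed

lemma bld_distinct:
  "length s = length (filter (\<lambda>b. b) a) \<Longrightarrow> length d = length (filter Not a) \<Longrightarrow>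
   distinct s \<Longrightarrow> distinct d \<Longrightarrow> set s \<inter> set d = {} \<Longrightarrow> distinct (bld a s d)"
proof (induction a arbitrary: s d)
  case Nil then show ?case by simp
next
  case (Cons b a)
  show ?case
  proof (cases b)
    case True
    with Cons.prems obtain y s' where s: "s = y # s'" by (cases s) auto
    have st: "set (bld a s' d) = set s' \<union> set d"
      using bld_props[of s' a d] Cons.prems True s by simp
    with s Cons.IH[of s' d] Cons.prems True show ?thesis by auto
  next
    case False
    with Cons.prems obtain y d' where d: "d = y # d'" by (cases d) auto
    have st: "set (bld a s d') = set s \<union> set d'"
      using bld_props[of s a d'] Cons.prems False d by simp
    with d Cons.IH[of s d'] Cons.prems False show ?thesis by auto
  qed
qed

lemma bld_map:
  "length s = length (filter (\<lambda>b. b) a) \<Longrightarrow> length d = length (filter Not a) \<Longrightarrow>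
   (\<forall>i\<in>set s. x i) \<Longrightarrow> (\<forall>i\<in>set d. \<not> x i) \<Longrightarrow> map x (bld a s d) = a"
proof (induction a arbitrary: s d)
  case Nil then show ?case by simp
next
  case (Cons b a)
  show ?case
  proof (cases b)
    case True
    with Cons.prems obtain y s' where s: "s = y # s'" by (cases s) auto
    with Cons.IH[of s' d] Cons.prems True show ?thesis by auto
  next
    case False
    with Cons.prems obtain y d' where d: "d = y # d'" by (cases d) auto
    with Cons.IH[of s d'] Cons.prems False show ?thesis by auto
  qed
qed

lemma bld_inj:
  "length s = length (filter (\<lambda>b. b) a) \<Longrightarrow> length s' = length (filter (\<lambda>b. b) a) \<Longrightarrow>
   length d = length (filter Not a) \<Longrightarrow> bld a s d = bld a s' d \<Longrightarrow> s = s'"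
proof (induction a arbitrary: s s' d)
  case Nil then show ?case by simp
next
  case (Cons b a)
  show ?case
  proof (cases b)
    case True
    with Cons.prems obtain y t where s: "s = y # t" by (cases s) auto
    from True Cons.prems obtain y' t' where s': "s' = y' # t'" by (cases s') auto
    with s Cons.IH[of t t' d] Cons.prems True show ?thesis by auto
  next
    case False
    with Cons.prems obtain y d' where d: "d = y # d'" by (cases d) auto
    with Cons.IH[of s s' d'] Cons.prems False show ?thesis by auto
  qed
qed

lemma umin_fun_props:
  assumes "nonconst \<phi>"
  shows "\<exists>a. length a = fst \<phi> \<and> \<not> snd \<phi> a \<and> weight a = umin_fun \<phi>"
    and "length a = fst \<phi> \<Longrightarrow> \<not> snd \<phi> a \<Longrightarrow> umin_fun \<phi> \<le> weight a"
proof -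
  let ?W = "{weight a | a. length a = fst \<phi> \<and> \<not> snd \<phi> a}"
  have fin: "finite ?W"
    by (rule finite_subset[of _ "{..fst \<phi>}"]) (auto simp: weight_def intro: order.trans[OF length_filter_le])
  have ne: "?W \<noteq> {}" using assms unfolding nonconst_def by blast
  from Min_in[OF fin ne] show "\<exists>a. length a = fst \<phi> \<and> \<not> snd \<phi> a \<and> weight a = umin_fun \<phi>"
    unfolding umin_fun_def by force
  show "length a = fst \<phi> \<Longrightarrow> \<not> snd \<phi> a \<Longrightarrow> umin_fun \<phi> \<le> weight a"
    unfolding umin_fun_def using fin by (intro Min_le) auto
qed

lemma part1:
  assumes F: "\<phi> \<in> F" and la: "length a = fst \<phi>" and na: "\<not> snd \<phi> a" and wk: "weight a \<le> k"
  shows "\<exists>c1 c2. 0 < c1 \<and> c1 \<le> c2 \<and> nontrivial_csp F k (real (weight a)) c1 c2"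
proof -
  define u where "u = weight a"
  define z where "z = length (filter Not a)"
  define L where "L = Suc k"
  have lu: "length (filter (\<lambda>b. b) a) = u" by (simp add: u_def weight_def id_def)
  define D where "D j = [j*z..<(j+1)*z]" for j
  define B where "B n j = {s. length s = u \<and> distinct s \<and> set s \<subseteq> {..<n} - {j*z..<(j+1)*z}}" for n j
  define C where "C n = (\<lambda>(j,s). (\<phi>, bld a s (D j))) ` (SIGMA j:{..<L}. B n j)" for n
  define N0 where "N0 = 2*(L*z+u)+1"
  have ld: "length (D j) = length (filter Not a)" for j by (simp add: D_def z_def)
  have finB: "finite (B n j)" for n j
    by (rule finite_subset[OF _ finite_lists_length_eq[of "{..<n}" u]]) (auto simp: B_def)
  have finC: "finite (C n)" for n unfolding C_def using finB by auto
  have inst: "is_instance F n (C n)" if n: "L*z \<le> n" for n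
  proof -
    have "\<psi> \<in> F \<and> length is = fst \<psi> \<and> distinct is \<and> set is \<subseteq> {..<n}" if "(\<psi>, is) \<in> C n" for \<psi> "is"
    proof -
      from that obtain j s where j: "j < L" "s \<in> B n j" and eq: "\<psi> = \<phi>" "is = bld a s (D j)"
        unfolding C_def by auto
      have ls: "length s = length (filter (\<lambda>b. b) a)" using j lu by (simp add: B_def)
      have p: "length is = length a \<and> set is = set s \<union> set (D j)"
        using bld_props[OF ls ld] eq by simp
      have "(j+1)*z \<le> L*z" using j by (intro mult_le_mono1) simp
      then have Ds: "set (D j) \<subseteq> {..<n}" using n by (auto simp: D_def)
      have "distinct is" unfolding eq(2)
        by (rule bld_distinct[OF ls ld]) (use j in \<open>auto simp: B_def D_def\<close>)
      then show ?thesis using p Ds j eq F la by (auto simp: B_def)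
    qed
    then show ?thesis unfolding is_instance_def using finC by auto
  qed
  have upper: "card (C n) \<le> L * n ^ u" for n
  proof -
    have "card (C n) \<le> card (SIGMA j:{..<L}. B n j)" unfolding C_def by (rule card_image_le) (use finB in auto)
    also have "\<dots> = (\<Sum>j<L. card (B n j))" using finB by (simp add: card_SigmaI)
    also have "\<dots> \<le> (\<Sum>j<L. n ^ u)"
    proof (rule sum_mono)
      fix j
      have "card (B n j) \<le> card {s. set s \<subseteq> {..<n} \<and> length s = u}"
        by (rule card_mono[OF finite_lists_length_eq]) (auto simp: B_def)
      then show "card (B n j) \<le> n ^ u" by (simp add: card_lists_length_eq)
    qed
    finally show ?thesis by simp
  qed
  have lower: "(real n / 2) ^ u \<le> real (card (C n))" if n: "N0 \<le> n" for n
  proof -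
    have L1: "1 \<le> L" by (simp add: L_def)
    have zL: "z \<le> L * z" using L1 by simp
    have sub: "(\<lambda>s. (\<phi>, bld a s (D 0))) ` B n 0 \<subseteq> C n" unfolding C_def by (force simp: L_def)
    have inj: "inj_on (\<lambda>s. (\<phi>, bld a s (D 0))) (B n 0)"
      by (rule inj_onI) (use bld_inj[OF _ _ ld] lu in \<open>auto simp: B_def\<close>)
    have cB: "card (B n 0) \<le> card (C n)"
      using card_mono[OF finC sub] card_image[OF inj] by simp
    have B0: "B n 0 = {s. length s = u \<and> distinct s \<and> set s \<subseteq> {z..<n}}"
      by (auto simp: B_def)
    have b: "2*(z+u) < n"
    proof -
      have "2*(z + u) \<le> 2*(L*z + u)" using zL by simp
      also have "\<dots> < N0" by (simp add: N0_def)
      finally show ?thesis using n by simp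
    qed
    have un: "u \<le> card {z..<n}" using b by simp
    have cB0: "card (B n 0) = \<Prod>{card {z..<n} - u + 1 .. card {z..<n}}"
      unfolding B0 by (rule card_lists_distinct_length_eq[OF _ un]) simp
    have pr: "(n - z - u + 1) ^ u \<le> \<Prod>{card {z..<n} - u + 1 .. card {z..<n}}"
    proof -
      have "(\<Prod>i\<in>{n - z - u + 1 .. n - z}. n - z - u + 1) \<le> (\<Prod>i\<in>{n - z - u + 1 .. n - z}. i)"
        by (rule prod_mono) auto
      moreover have "card {n - z - u + 1 .. n - z} = u" using un by simp
      ultimately show ?thesis by simp
    qed
    have k1: "(n - z - u + 1) ^ u \<le> card (C n)" using cB cB0 pr by simp
    have c: "n \<le> 2*(n - z - u + 1)" using b by arith
    define w where "w = n - z - u + 1"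
    have "real n \<le> 2 * real w" using c unfolding w_def[symmetric] by (metis of_nat_le_iff of_nat_mult of_nat_numeral)
    then have "real n / 2 \<le> real w" by simp
    then have "(real n / 2) ^ u \<le> real w ^ u" by (intro power_mono) auto
    also have "\<dots> \<le> real (card (C n))" using k1 unfolding w_def[symmetric] by (metis of_nat_le_iff of_nat_power)
    finally show ?thesis .
  qed
  have no: "\<not> yes_instance k n (C n)" if n: "N0 \<le> n" for n
  proof
    assume "yes_instance k n (C n)"
    then obtain x where cx: "card {i. i < n \<and> x i} = k" and sat: "\<forall>c\<in>C n. sat_constr x c"
      unfolding yes_instance_def by blast
    define Ones where "Ones = {i. i < n \<and> x i}"
    have Ln: "L*z \<le> n" using n by (simp add: N0_def)
    have "\<exists>j<L. \<forall>i\<in>{j*z..<(j+1)*z}. \<not> x i"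
    proof (rule ccontr)
      assume "\<not> ?thesis"
      then have h: "\<forall>j<L. \<exists>i. j*z \<le> i \<and> i < (j+1)*z \<and> x i" by (meson atLeastLessThan_iff)
      have "{..<L} \<subseteq> (\<lambda>i. i div z) ` Ones"
      proof
        fix j assume "j \<in> {..<L}"
        then have j: "j < L" by simp
        with h obtain i where i: "j*z \<le> i" "i < (j+1)*z" "x i" by blast
        have "(j+1)*z \<le> L*z" using j by (intro mult_le_mono1) simp
        then have "i < n" using i Ln by linarith
        moreover have "i div z = j" by (rule div_nat_eqI) (use i in \<open>auto simp: mult.commute\<close>)
        ultimately show "j \<in> (\<lambda>i. i div z) ` Ones" using i unfolding Ones_def by force
      qed
      then have "L \<le> card ((\<lambda>i. i div z) ` Ones)"
        by (metis card_lessThan card_mono finite_imageI finite_Collect_conjI finite_lessThan lessThan_def Ones_def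
              finite_Collect_less_nat)
      also have "\<dots> \<le> card Ones" by (rule card_image_le) (simp add: Ones_def)
      finally show False using cx by (simp add: Ones_def L_def)
    qed
    then obtain j where j: "j < L" and jz: "\<forall>i\<in>{j*z..<(j+1)*z}. \<not> x i" by blast
    have "u \<le> card Ones" using cx wk by (simp add: Ones_def u_def)
    then obtain S where S: "S \<subseteq> Ones" "card S = u" "finite S" by (rule obtain_subset_with_card_n)
    define s where "s = sorted_list_of_set S"
    have s: "set s = S" "distinct s" "length s = u" using S by (auto simp: s_def)
    have sB: "s \<in> B n j" using s S jz unfolding B_def Ones_def by auto
    then have "(\<phi>, bld a s (D j)) \<in> C n" unfolding C_def using j by force
    with sat have "snd \<phi> (map x (bld a s (D j)))" by (auto simp: sat_constr_def)
    moreover have "map x (bld a s (D j)) = a"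
      by (rule bld_map) (use s lu ld S jz in \<open>auto simp: Ones_def D_def\<close>)
    ultimately show False using na by simp
  qed
  have c1: "0 < (1/2^u :: real)" by simp
  have "(1/2^u :: real) \<le> 1" by simp
  moreover have "(1::real) \<le> real L" by (simp add: L_def)
  ultimately have c12: "(1/2^u :: real) \<le> real L" by linarith
  have inf: "infinite {(n, C). csp_instance F (real u) (1/2^u) (real L) n C \<and> \<not> yes_instance k n C}"
  proof
    assume fin: "finite {(n, C). csp_instance F (real u) (1/2^u) (real L) n C \<and> \<not> yes_instance k n C}"
    have "(\<lambda>n. (n, C n)) ` {N0..} \<subseteq> {(n, C). csp_instance F (real u) (1/2^u) (real L) n C \<and> \<not> yes_instance k n C}"
    proof (rule image_subsetI)
      fix n assume n: "n \<in> {N0..}"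
      then have n0: "0 < n" "N0 \<le> n" by (auto simp: N0_def)
      have pw: "real n powr real u = real n ^ u" using n0 by (simp add: powr_realpow)
      have "1 / 2 ^ u * real n ^ u = (real n / 2) ^ u" by (simp add: power_divide)
      then have "1 / 2 ^ u * real n powr real u \<le> real (card (C n))" using lower[OF n0(2)] pw by simp
      moreover have "real (card (C n)) \<le> real L * real n powr real u"
        using upper[of n] pw by (metis of_nat_le_iff of_nat_mult of_nat_power)
      moreover have "is_instance F n (C n)" using inst n0 by (simp add: N0_def)
      ultimately have "csp_instance F (real u) (1/2^u) (real L) n (C n) \<and> \<not> yes_instance k n (C n)"
        using no[OF n0(2)] by (simp add: csp_instance_def)
      then show "(n, C n) \<in> {(n, C). csp_instance F (real u) (1/2^u) (real L) n C \<and> \<not> yes_instance k n C}"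
        by simp
    qed
    moreover have "inj_on (\<lambda>n. (n, C n)) {N0..}" by (rule inj_onI) simp
    ultimately have "finite {N0..}" using fin by (meson finite_imageD finite_subset)
    then show False using infinite_Ici by blast
  qed
  show ?thesis unfolding nontrivial_csp_def u_def[symmetric] using c1 c12 inf by blast
qed


lemma sat_from_T:
  assumes inst: "is_instance F n C" and um: "\<forall>\<phi>\<in>F. u \<le> umin_fun \<phi>"
    and nc: "\<forall>\<phi>\<in>F. nonconst \<phi>"
    and T: "T \<subseteq> {..<n}" "card T = k" and small: "\<forall>c\<in>C. card (set (snd c) \<inter> T) < u"
  shows "yes_instance k n C"
proof -
  define x where "x i = (i \<in> T)" for i
  have "{i. i < n \<and> x i} = T" using T by (auto simp: x_def)
  then have ck: "card {i. i < n \<and> x i} = k" using T by simp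
  have "sat_constr x c" if c: "c \<in> C" for c
  proof -
    obtain \<phi> "is" where ceq: "c = (\<phi>, is)" by (cases c)
    with c inst have \<phi>: "\<phi> \<in> F" "length is = fst \<phi>" "distinct is"
      unfolding is_instance_def by auto
    have "weight (map x is) = length (filter (\<lambda>i. i \<in> T) is)"
      by (simp add: weight_def filter_map comp_def x_def)
    also have "\<dots> = card (set (filter (\<lambda>i. i \<in> T) is))"
      using \<phi>(3) by (metis distinct_card distinct_filter)
    also have "\<dots> = card (set is \<inter> T)" by (simp add: Int_def)
    finally have w: "weight (map x is) < u" using small c ceq by auto
    show ?thesis
    proof (rule ccontr)
      assume "\<not> sat_constr x c"
      then have "\<not> snd \<phi> (map x is)" by (simp add: sat_constr_def ceq)
      then have "umin_fun \<phi> \<le> weight (map x is)"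
        using umin_fun_props(2)[of \<phi> "map x is"] nc \<phi> by simp
      then show False using w um \<phi> by fastforce
    qed
  qed
  then show ?thesis using ck unfolding yes_instance_def by blast
qed

lemma counting:
  assumes finC: "finite C" and R: "\<forall>c\<in>C. card (set (snd c)) \<le> R" and kn: "k \<le> n" and uk: "u \<le> k"
    and big: "card C * 2^R * (k choose u) < n choose u"
  shows "\<exists>T. T \<subseteq> {..<n} \<and> card T = k \<and> (\<forall>c\<in>C. card (set (snd c) \<inter> T) < u)"
proof -
  define All where "All = {T. T \<subseteq> {..<n} \<and> card T = k}"
  define M where "M = (n - u) choose (k - u)"
  define G where "G S = {T\<in>All. S \<subseteq> T}" for S
  define Bad where "Bad = {T\<in>All. \<exists>c\<in>C. u \<le> card (set (snd c) \<inter> T)}"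
  have finAll: "finite All" unfolding All_def
    by (rule finite_subset[of _ "Pow {..<n}"]) auto
  have cAll: "card All = n choose k" using n_subsets[of "{..<n}" k] by (simp add: All_def)
  have cG: "card (G S) \<le> M" if cS: "card S = u" for S
  proof (cases "S \<subseteq> {..<n}")
    case False
    then have "G S = {}" by (auto simp: G_def All_def)
    then show ?thesis by simp
  next
    case True
    then have finS: "finite S" using finite_subset by blast
    have sub: "(\<lambda>T. T - S) ` G S \<subseteq> {B. B \<subseteq> {..<n} - S \<and> card B = k - u}"
    proof clarify
      fix T assume "T \<in> G S"
      then have "T \<subseteq> {..<n}" "card T = k" "S \<subseteq> T" by (auto simp: G_def All_def)
      then show "T - S \<subseteq> {..<n} - S \<and> card (T - S) = k - u"
        using finS cS by (auto simp: card_Diff_subset)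
    qed
    have inj: "inj_on (\<lambda>T. T - S) (G S)"
    proof (rule inj_onI)
      fix T1 T2 assume "T1 \<in> G S" "T2 \<in> G S" "T1 - S = T2 - S"
      then show "T1 = T2" unfolding G_def by blast
    qed
    have "card (G S) = card ((\<lambda>T. T - S) ` G S)" using card_image[OF inj] by simp
    also have "\<dots> \<le> card {B. B \<subseteq> {..<n} - S \<and> card B = k - u}"
      by (rule card_mono[OF _ sub]) (rule finite_subset[of _ "Pow {..<n}"], auto)
    also have "\<dots> = card ({..<n} - S) choose (k - u)" by (rule n_subsets) simp
    also have "\<dots> = M" using True finS cS by (simp add: M_def card_Diff_subset)
    finally show ?thesis .
  qed
  define I where "I c = {S. S \<subseteq> set (snd c) \<and> card S = u}" for c :: "'a \<times> nat list"
  have finI: "finite (I c)" for c unfolding I_def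
    by (rule finite_subset[of _ "Pow (set (snd c))"]) auto
  have cI: "card (I c) \<le> 2 ^ R" if "c \<in> C" for c
  proof -
    have "card (I c) \<le> card (Pow (set (snd c)))" by (rule card_mono) (auto simp: I_def)
    also have "\<dots> = 2 ^ card (set (snd c))" by (simp add: card_Pow)
    also have "\<dots> \<le> 2 ^ R" using R that by (intro power_increasing) auto
    finally show ?thesis .
  qed
  have BadSub: "Bad \<subseteq> (\<Union>c\<in>C. \<Union>S\<in>I c. G S)"
  proof
    fix T assume "T \<in> Bad"
    then obtain c where c: "c \<in> C" "u \<le> card (set (snd c) \<inter> T)" and TA: "T \<in> All"
      by (auto simp: Bad_def)
    obtain S where S: "S \<subseteq> set (snd c) \<inter> T" "card S = u" "finite S"
      using obtain_subset_with_card_n[OF c(2)] by blast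
    then have "S \<in> I c" "T \<in> G S" using TA by (auto simp: I_def G_def)
    then show "T \<in> (\<Union>c\<in>C. \<Union>S\<in>I c. G S)" using c by blast
  qed
  have finG: "finite (G S)" for S using finAll by (simp add: G_def)
  have "card Bad \<le> card (\<Union>c\<in>C. \<Union>S\<in>I c. G S)"
    by (rule card_mono[OF _ BadSub]) (use finC finI finG in auto)
  also have "\<dots> \<le> (\<Sum>c\<in>C. card (\<Union>S\<in>I c. G S))" by (rule card_UN_le[OF finC])
  also have "\<dots> \<le> (\<Sum>c\<in>C. \<Sum>S\<in>I c. card (G S))" by (rule sum_mono) (rule card_UN_le[OF finI])
  also have "\<dots> \<le> (\<Sum>c\<in>C. \<Sum>S\<in>I c. M)"
    by (intro sum_mono cG) (auto simp: I_def)
  also have "\<dots> = (\<Sum>c\<in>C. card (I c) * M)" by simp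
  also have "\<dots> \<le> (\<Sum>c\<in>C. 2 ^ R * M)" by (intro sum_mono mult_le_mono1 cI)
  also have "\<dots> = card C * 2 ^ R * M" by simp
  finally have cBad: "card Bad \<le> card C * 2 ^ R * M" .
  have cm: "(n choose k) * (k choose u) = (n choose u) * M"
    unfolding M_def by (rule choose_mult[OF uk kn])
  have pos: "0 < n choose k" using kn by simp
  have "card C * 2 ^ R * M * (n choose u) = (card C * 2 ^ R * (k choose u)) * (n choose k)"
    using cm by (simp add: algebra_simps)
  also have "\<dots> < (n choose u) * (n choose k)"
    by (rule mult_strict_right_mono[OF big pos])
  finally have "card C * 2 ^ R * M * (n choose u) < (n choose k) * (n choose u)" by (simp add: mult.commute)
  then have "card C * 2 ^ R * M < n choose k" by (simp add: mult_less_cancel2)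
  with cBad cAll have lt: "card Bad < card All" by linarith
  have "\<not> All \<subseteq> Bad"
  proof
    assume "All \<subseteq> Bad"
    then have "card All \<le> card Bad" by (rule card_mono[rotated]) (auto simp: Bad_def finAll)
    with lt show False by simp
  qed
  then obtain T where "T \<in> All" "T \<notin> Bad" by blast
  then show ?thesis by (auto simp: All_def Bad_def not_le)
qed


lemma part2:
  assumes cf: "constraint_family F" and ne: "F \<noteq> {}" and g0: "0 \<le> \<gamma>" and gu: "\<gamma> < real (umin F)"
  shows "trivial_csp F k \<gamma> c1 c2"
proof -
  define u where "u = umin F"
  have finF: "finite F" and nc: "\<forall>\<phi>\<in>F. nonconst \<phi>" using cf by (auto simp: constraint_family_def)
  have um: "\<forall>\<phi>\<in>F. u \<le> umin_fun \<phi>" unfolding u_def umin_def using finF by auto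
  define R where "R = Max (fst ` F)"
  have Rb: "fst \<phi> \<le> R" if "\<phi> \<in> F" for \<phi> unfolding R_def using finF that by auto
  have upos: "0 < u" using g0 gu u_def by linarith
  define e where "e = real u - \<gamma>"
  have e0: "0 < e" using gu by (simp add: e_def u_def)
  define K where "K = real (2^R * (k choose u))"
  have K0: "0 \<le> K" by (simp add: K_def)
  define A where "A = max 1 (c2 * K * real u ^ u)"
  have A1: "1 \<le> A" by (simp add: A_def)
  define n0 where "n0 = nat \<lceil>A powr (1/e)\<rceil> + k + 1"
  show ?thesis unfolding trivial_csp_def
  proof (intro exI allI impI)
    fix n C assume n: "n0 \<le> n" and ci: "csp_instance F \<gamma> c1 c2 n C"
    have inst: "is_instance F n C" and cC: "real (card C) \<le> c2 * real n powr \<gamma>"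
      using ci by (auto simp: csp_instance_def)
    have kn: "k \<le> n" using n by (simp add: n0_def)
    have finC: "finite C" using inst by (simp add: is_instance_def)
    have Rc: "\<forall>c\<in>C. card (set (snd c)) \<le> R"
    proof
      fix c assume "c \<in> C"
      moreover obtain \<phi> "is" where "c = (\<phi>, is)" by (cases c)
      ultimately have "\<phi> \<in> F" "length is = fst \<phi>" using inst by (auto simp: is_instance_def)
      then show "card (set (snd c)) \<le> R" using Rb \<open>c = (\<phi>, is)\<close> card_length[of "is"] by fastforce
    qed
    show "yes_instance k n C"
    proof (cases "k < u")
      case True
      show ?thesis
      proof (rule sat_from_T[OF inst um nc, of "{..<k}"])
        show "{..<k} \<subseteq> {..<n}" using kn by auto
        show "card {..<k} = k" by simp
        show "\<forall>c\<in>C. card (set (snd c) \<inter> {..<k}) < u"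
        proof
          fix c assume "c \<in> C"
          have "card (set (snd c) \<inter> {..<k}) \<le> card {..<k}" by (rule card_mono) auto
          then show "card (set (snd c) \<inter> {..<k}) < u" using True by simp
        qed
      qed
    next
      case False
      then have uk: "u \<le> k" by simp
      have npos: "0 < real n" using n by (simp add: n0_def)
      have "A powr (1/e) \<le> real (nat \<lceil>A powr (1/e)\<rceil>)" by linarith
      then have "A powr (1/e) < real n" using n unfolding n0_def by linarith
      then have "(A powr (1/e)) powr e < real n powr e" using e0 by (intro powr_less_mono2) auto
      moreover have "(A powr (1/e)) powr e = A" using A1 e0 by (simp add: powr_powr)
      ultimately have hA: "A < real n powr e" by simp
      have pg: "0 < real n powr \<gamma>" using npos by simp
      have "real (card C) * K * real u ^ u \<le> c2 * real n powr \<gamma> * K * real u ^ u"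
        using cC K0 by (intro mult_right_mono) auto
      also have "\<dots> = (c2 * K * real u ^ u) * real n powr \<gamma>" by (simp add: algebra_simps)
      also have "\<dots> \<le> A * real n powr \<gamma>" using pg by (intro mult_right_mono) (auto simp: A_def)
      also have "\<dots> < real n powr e * real n powr \<gamma>" using hA pg by simp
      also have "\<dots> = real n powr (real u)" by (simp add: e_def powr_add[symmetric])
      also have "\<dots> = real n ^ u" using npos by (simp add: powr_realpow)
      finally have h1: "real (card C) * K * real u ^ u < real n ^ u" .
      have up: "0 < real u ^ u" using upos by simp
      have "real (card C) * K < real n ^ u / real u ^ u"
        using h1 up by (simp add: field_simps)
      also have "\<dots> = (real n / real u) ^ u" by (simp add: power_divide)
      also have "\<dots> \<le> real (n choose u)" by (rule binomial_ge_n_over_k_pow_k) (use uk kn in simp)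
      finally have "real (card C * 2^R * (k choose u)) < real (n choose u)"
        by (simp add: K_def mult.assoc)
      then have big: "card C * 2^R * (k choose u) < n choose u" by (simp only: of_nat_less_iff)
      obtain T where "T \<subseteq> {..<n}" "card T = k" "\<forall>c\<in>C. card (set (snd c) \<inter> T) < u"
        using counting[OF finC Rc kn uk big] by blast
      then show ?thesis by (rule sat_from_T[OF inst um nc])
    qed
  qed
qed

theorem mainTheorem6:
  fixes F :: "bfun set" and k :: nat
  assumes "constraint_family F" and "F \<noteq> {}"
  shows "(umin F \<le> k \<longrightarrow>
           (\<exists>c1 c2. 0 < c1 \<and> c1 \<le> c2 \<and> nontrivial_csp F k (real (umin F)) c1 c2))
       \<and> (\<forall>\<gamma>::real. 0 \<le> \<gamma> \<and> \<gamma> < real (umin F) \<longrightarrow>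
           (\<forall>c1 c2. 0 < c1 \<and> c1 \<le> c2 \<longrightarrow> trivial_csp F k \<gamma> c1 c2))"
proof (intro conjI impI allI)
  assume uk: "umin F \<le> k"
  have finF: "finite F" and nc: "\<forall>\<phi>\<in>F. nonconst \<phi>" using assms(1) by (auto simp: constraint_family_def)
  have "umin F \<in> umin_fun ` F" unfolding umin_def using finF assms(2) by (intro Min_in) auto
  then obtain \<phi> where \<phi>: "\<phi> \<in> F" "umin_fun \<phi> = umin F" by auto
  obtain a where a: "length a = fst \<phi>" "\<not> snd \<phi> a" "weight a = umin_fun \<phi>"
    using umin_fun_props(1)[of \<phi>] nc \<phi> by auto
  show "\<exists>c1 c2. 0 < c1 \<and> c1 \<le> c2 \<and> nontrivial_csp F k (real (umin F)) c1 c2"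
    using part1[OF \<phi>(1) a(1) a(2)] a(3) \<phi>(2) uk by simp
next
  fix \<gamma> :: real and c1 c2 :: real
  assume "0 \<le> \<gamma> \<and> \<gamma> < real (umin F)"
  then show "trivial_csp F k \<gamma> c1 c2" using part2[OF assms] by blast
qed

end
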